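(* Let $G$ be a concurrent game structure, $T\subseteq S$, and assume all states of $T\cup W_2$ are absorbing. Given a player-1 selector $\xi_1$, the memoryless strategy $\overline{\xi}_1$ is proper if and only if for every pure player-2 selector $\xi_2$ and all states $s\in S$ we have $\Pr_s^{\overline{\xi}_1,\overline{\xi}_2}(\mathrm{Reach}(T\cup W_2))=1$.
   Context: Concurrent game structure $G=(S,M,\Gamma_1,\Gamma_2,\delta)$: finite states $S$, finite moves $M$, nonempty move sets $\Gamma_i(s)\subseteq M$, transition probabilities $\delta(s,a_1,a_2)\in\mathrm{Distr}(S)$ (moves chosen simultaneously and independently). A state is absorbing if every move pair leads back to it with probability 1. A selector for player $i$ assigns to each state $s$ a distribution on $\Gamma_i(s)$; it is pure if each such distribution is a point mass; $\overline{\xi}$ is the memoryless strategy playing $\xi$ at every step. Strategies map finite histories to distributions on available moves; $\Pr_s^{\pi_1,\pi_2}$ is the induced measure on plays from $s$. $\mathrm{Reach}(X)$ is the set of plays visiting $X$. $\mathrm{val}_1(\mathrm{Reach}(T))(s)=\sup_{\pi_1}\inf_{\pi_2}\Pr_s^{\pi_1,\pi_2}(\mathrm{Reach}(T))$ and $W_2=\{s:\mathrm{val}_1(\mathrm{Reach}(T))(s)=0\}$. A player-1 strategy $\pi_1$ is proper if for every player-2 strategy $\pi_2$ and all $s\in S\setminus(T\cup W_2)$, $\Pr_s^{\pi_1,\pi_2}(\mathrm{Reach}(T\cup W_2))=1$; a selector $\xi_1$ is proper if $\overline{\xi}_1$ is. *)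

theory Defs
  imports "HOL-Probability.Probability"
begin

text \<open>Concurrent game structure: states of finite type 's (S = UNIV), moves of finite
 type 'm (M = UNIV), available move sets G1 G2, transition function delta.
 Histories are nonempty lists of states, the last element being the current state.\<close>

definition game :: "('s::finite \<Rightarrow> 'm::finite set) \<Rightarrow> ('s \<Rightarrow> 'm set) \<Rightarrow> ('s \<Rightarrow> 'm \<Rightarrow> 'm \<Rightarrow> 's pmf) \<Rightarrow> bool" where
  "game G1 G2 delta \<longleftrightarrow> (\<forall>s. G1 s \<noteq> {} \<and> G2 s \<noteq> {})"

definition strategy :: "('s \<Rightarrow> 'm set) \<Rightarrow> ('s list \<Rightarrow> 'm pmf) \<Rightarrow> bool" where
  "strategy G p \<longleftrightarrow> (\<forall>h. h \<noteq> [] \<longrightarrow> set_pmf (p h) \<subseteq> G (last h))"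

definition selector :: "('s \<Rightarrow> 'm set) \<Rightarrow> ('s \<Rightarrow> 'm pmf) \<Rightarrow> bool" where
  "selector G xi \<longleftrightarrow> (\<forall>s. set_pmf (xi s) \<subseteq> G s)"

definition pure_selector :: "('s \<Rightarrow> 'm set) \<Rightarrow> ('s \<Rightarrow> 'm pmf) \<Rightarrow> bool" where
  "pure_selector G xi \<longleftrightarrow> selector G xi \<and> (\<forall>s. \<exists>a. xi s = return_pmf a)"

definition memoryless :: "('s \<Rightarrow> 'm pmf) \<Rightarrow> ('s list \<Rightarrow> 'm pmf)" where
  "memoryless xi = (\<lambda>h. xi (last h))"

definition step :: "('s \<Rightarrow> 'm \<Rightarrow> 'm \<Rightarrow> 's pmf) \<Rightarrow> ('s list \<Rightarrow> 'm pmf) \<Rightarrow> ('s list \<Rightarrow> 'm pmf)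
    \<Rightarrow> 's list \<Rightarrow> 's pmf" where
  "step delta pi1 pi2 h =
     bind_pmf (pi1 h) (\<lambda>a1. bind_pmf (pi2 h) (\<lambda>a2. delta (last h) a1 a2))"

fun reach_within :: "('s \<Rightarrow> 'm \<Rightarrow> 'm \<Rightarrow> 's pmf) \<Rightarrow> ('s list \<Rightarrow> 'm pmf) \<Rightarrow> ('s list \<Rightarrow> 'm pmf)
    \<Rightarrow> 's set \<Rightarrow> nat \<Rightarrow> 's list \<Rightarrow> real" where
  "reach_within delta pi1 pi2 X 0 h = (if last h \<in> X then 1 else 0)"
| "reach_within delta pi1 pi2 X (Suc n) h =
     (if last h \<in> X then 1
      else measure_pmf.expectation (step delta pi1 pi2 h)
             (\<lambda>t. reach_within delta pi1 pi2 X n (h @ [t])))"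

text \<open>Pr_s^{pi1,pi2}(Reach X), as the limit (= supremum) of the finite-horizon
 reachability probabilities (continuity of the path measure from below).\<close>
definition prob_reach :: "('s \<Rightarrow> 'm \<Rightarrow> 'm \<Rightarrow> 's pmf) \<Rightarrow> ('s list \<Rightarrow> 'm pmf) \<Rightarrow> ('s list \<Rightarrow> 'm pmf)
    \<Rightarrow> 's set \<Rightarrow> 's \<Rightarrow> real" where
  "prob_reach delta pi1 pi2 X s = (SUP n. reach_within delta pi1 pi2 X n [s])"

definition val1 :: "('s \<Rightarrow> 'm set) \<Rightarrow> ('s \<Rightarrow> 'm set) \<Rightarrow> ('s \<Rightarrow> 'm \<Rightarrow> 'm \<Rightarrow> 's pmf)
    \<Rightarrow> 's set \<Rightarrow> 's \<Rightarrow> real" where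
  "val1 G1 G2 delta T s =
     (SUP pi1\<in>{p. strategy G1 p}. INF pi2\<in>{p. strategy G2 p}. prob_reach delta pi1 pi2 T s)"

definition W2 :: "('s \<Rightarrow> 'm set) \<Rightarrow> ('s \<Rightarrow> 'm set) \<Rightarrow> ('s \<Rightarrow> 'm \<Rightarrow> 'm \<Rightarrow> 's pmf) \<Rightarrow> 's set \<Rightarrow> 's set" where
  "W2 G1 G2 delta T = {s. val1 G1 G2 delta T s = 0}"

definition absorbing :: "('s \<Rightarrow> 'm set) \<Rightarrow> ('s \<Rightarrow> 'm set) \<Rightarrow> ('s \<Rightarrow> 'm \<Rightarrow> 'm \<Rightarrow> 's pmf) \<Rightarrow> 's \<Rightarrow> bool" where
  "absorbing G1 G2 delta s \<longleftrightarrow> (\<forall>a1\<in>G1 s. \<forall>a2\<in>G2 s. delta s a1 a2 = return_pmf s)"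

definition proper :: "('s \<Rightarrow> 'm set) \<Rightarrow> ('s \<Rightarrow> 'm set) \<Rightarrow> ('s \<Rightarrow> 'm \<Rightarrow> 'm \<Rightarrow> 's pmf) \<Rightarrow> 's set
    \<Rightarrow> ('s list \<Rightarrow> 'm pmf) \<Rightarrow> bool" where
  "proper G1 G2 delta T pi1 \<longleftrightarrow>
     (\<forall>pi2. strategy G2 pi2 \<longrightarrow>
        (\<forall>s. s \<notin> T \<union> W2 G1 G2 delta T \<longrightarrow>
             prob_reach delta pi1 pi2 (T \<union> W2 G1 G2 delta T) s = 1))"

end

theory Submission
  imports Defs
begin

lemma exp_fin: "measure_pmf.expectation (p :: ('a::finite) pmf) f = (\<Sum>a\<in>UNIV. f a * pmf p a)"
  by (rule integral_measure_pmf_real) auto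

lemma R_bounds: "0 \<le> reach_within delta pi1 pi2 X n h \<and> reach_within delta pi1 pi2 X n (h::('s::finite) list) \<le> 1"
proof (induction n arbitrary: h)
  case 0 then show ?case by simp
next
  case (Suc n)
  let ?p = "step delta pi1 pi2 h"
  have "(\<Sum>a\<in>UNIV. reach_within delta pi1 pi2 X n (h @ [a]) * pmf ?p a) \<le> (\<Sum>a\<in>UNIV. 1 * pmf ?p a)"
    by (intro sum_mono mult_right_mono) (use Suc in auto)
  also have "\<dots> = 1" using sum_pmf_eq_1[of UNIV ?p] by simp
  finally have "(\<Sum>a\<in>UNIV. reach_within delta pi1 pi2 X n (h @ [a]) * pmf ?p a) \<le> 1" .
  moreover have "0 \<le> (\<Sum>a\<in>UNIV. reach_within delta pi1 pi2 X n (h @ [a]) * pmf ?p a)"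
    by (intro sum_nonneg mult_nonneg_nonneg) (use Suc in auto)
  ultimately show ?case by (simp add: exp_fin)
qed

lemma R_X: "last h \<in> X \<Longrightarrow> reach_within delta pi1 pi2 X n h = 1"
  by (cases n) auto

lemma R_comp:
  fixes h :: "('s::finite) list"
  assumes B: "\<And>h'. h' \<noteq> [] \<Longrightarrow> 1 - reach_within delta pi1 pi2 X n h' \<le> B" and B0: "0 \<le> B"
  shows "h \<noteq> [] \<Longrightarrow> 1 - reach_within delta pi1 pi2 X (k + n) h \<le> B * (1 - reach_within delta pi1 pi2 X k h)"
proof (induction k arbitrary: h)
  case 0 then show ?case using B by (auto simp: R_X)
next
  case (Suc k)
  show ?case
  proof (cases "last h \<in> X")
    case True then show ?thesis by simp
  next
    case False
    let ?p = "step delta pi1 pi2 h"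
    let ?f = "\<lambda>a. reach_within delta pi1 pi2 X (k+n) (h @ [a])"
    let ?g = "\<lambda>a. reach_within delta pi1 pi2 X k (h @ [a])"
    have "1 - (\<Sum>a\<in>UNIV. ?f a * pmf ?p a) = (\<Sum>a\<in>UNIV. (1 - ?f a) * pmf ?p a)"
      using sum_pmf_eq_1[of UNIV ?p] by (simp add: left_diff_distrib sum_subtractf)
    also have "\<dots> \<le> (\<Sum>a\<in>UNIV. (B * (1 - ?g a)) * pmf ?p a)"
      by (intro sum_mono mult_right_mono Suc.IH) auto
    also have "\<dots> = B * (1 - (\<Sum>a\<in>UNIV. ?g a * pmf ?p a))"
    proof -
      have "(\<Sum>a\<in>UNIV. B * pmf ?p a) = B" using sum_pmf_eq_1[of UNIV ?p]
        by (simp flip: sum_distrib_left)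
      then show ?thesis
        by (simp add: left_diff_distrib right_diff_distrib sum_subtractf sum_distrib_left mult.assoc)
    qed
    finally show ?thesis using False by (simp add: exp_fin)
  qed
qed

fun lev :: "('s \<Rightarrow> 'm set) \<Rightarrow> ('s \<Rightarrow> 'm \<Rightarrow> 's pmf) \<Rightarrow> 's set \<Rightarrow> nat \<Rightarrow> 's set" where
  "lev G2 P X 0 = X"
| "lev G2 P X (Suc k) = X \<union> {s. \<forall>a\<in>G2 s. \<exists>t\<in>set_pmf (P s a). t \<in> lev G2 P X k}"

lemma lev_mono: "lev G2 P X k \<subseteq> lev G2 P X (Suc k)"
proof (induction k)
  case 0 then show ?case by auto
next
  case (Suc k)
  have e1: "lev G2 P X (Suc k) = X \<union> {s. \<forall>a\<in>G2 s. \<exists>t\<in>set_pmf (P s a). t \<in> lev G2 P X k}"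
    by (rule lev.simps)
  have e2: "lev G2 P X (Suc (Suc k)) = X \<union> {s. \<forall>a\<in>G2 s. \<exists>t\<in>set_pmf (P s a). t \<in> lev G2 P X (Suc k)}"
    by (rule lev.simps)
  show ?case unfolding e2 using Suc.IH unfolding e1 by blast
qed

lemma step_memo: "step delta (memoryless xi1) pi2 h
   = bind_pmf (pi2 h) (\<lambda>a2. bind_pmf (xi1 (last h)) (\<lambda>a1. delta (last h) a1 a2))"
  unfolding step_def memoryless_def by (rule bind_commute_pmf)

lemma level_bound:
  fixes delta :: "'s::finite \<Rightarrow> 'm::finite \<Rightarrow> 'm \<Rightarrow> 's pmf"
  assumes st: "strategy G2 pi2" and q0: "0 \<le> q" and q1: "q \<le> 1"
    and qP: "\<And>s a t. a \<in> G2 s \<Longrightarrow> t \<in> set_pmf (bind_pmf (xi1 s) (\<lambda>a1. delta s a1 a)) \<Longrightarrow>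
          q \<le> pmf (bind_pmf (xi1 s) (\<lambda>a1. delta s a1 a)) t"
  shows "h \<noteq> [] \<Longrightarrow> last h \<in> lev G2 (\<lambda>s a. bind_pmf (xi1 s) (\<lambda>a1. delta s a1 a)) X k \<Longrightarrow>
     q ^ k \<le> reach_within delta (memoryless xi1) pi2 X k h"
proof (induction k arbitrary: h)
  case 0 then show ?case by simp
next
  case (Suc k)
  define P where "P = (\<lambda>s a. bind_pmf (xi1 s) (\<lambda>a1. delta s a1 a))"
  define f where "f = (\<lambda>t. reach_within delta (memoryless xi1) pi2 X k (h @ [t]))"
  show ?case
  proof (cases "last h \<in> X")
    case True
    then show ?thesis using q0 q1 by (simp add: power_le_one mult_le_one)
  next
    case False
    let ?s = "last h"
    have hs: "\<forall>a\<in>G2 ?s. \<exists>t\<in>set_pmf (P ?s a). t \<in> lev G2 P X k"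
      using Suc.prems False by (simp add: P_def)
    have ex: "measure_pmf.expectation (step delta (memoryless xi1) pi2 h) f
       = (\<Sum>a\<in>UNIV. pmf (pi2 h) a * measure_pmf.expectation (P ?s a) f)"
      unfolding step_memo P_def by (subst pmf_expectation_bind[of UNIV]) auto
    have "(\<Sum>a\<in>UNIV. pmf (pi2 h) a * q ^ Suc k) \<le> (\<Sum>a\<in>UNIV. pmf (pi2 h) a * measure_pmf.expectation (P ?s a) f)"
    proof (intro sum_mono)
      fix a
      show "pmf (pi2 h) a * q ^ Suc k \<le> pmf (pi2 h) a * measure_pmf.expectation (P ?s a) f"
      proof (cases "a \<in> set_pmf (pi2 h)")
        case False then show ?thesis by (simp add: set_pmf_eq)
      next
        case True
        then have aG: "a \<in> G2 ?s" using st Suc.prems unfolding strategy_def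
          by blast
        then obtain t where t: "t \<in> set_pmf (P ?s a)" "t \<in> lev G2 P X k" using hs by blast
        have "q ^ Suc k = q ^ k * q" by simp
        also have "\<dots> \<le> f t * pmf (P ?s a) t"
          using Suc.IH[of "h @ [t]"] t qP[OF aG, of t] q0 R_bounds[of delta "memoryless xi1" pi2 X k "h@[t]"]
          unfolding f_def P_def by (intro mult_mono) auto
        also have "\<dots> \<le> (\<Sum>b\<in>UNIV. f b * pmf (P ?s a) b)"
          by (rule member_le_sum[where f="\<lambda>b. f b * pmf (P ?s a) b"])
             (auto simp: f_def R_bounds)
        also have "\<dots> = measure_pmf.expectation (P ?s a) f" by (simp add: exp_fin)
        finally show ?thesis by (intro mult_left_mono) auto
      qed
    qed
    also have "(\<Sum>a\<in>UNIV. pmf (pi2 h) a * q ^ Suc k) = q ^ Suc k"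
      using sum_pmf_eq_1[of UNIV "pi2 h"] by (simp flip: sum_distrib_right)
    finally show ?thesis using False ex by (simp add: f_def)
  qed
qed

lemma prob_reach_le1: "prob_reach delta pi1 pi2 X (s::'s::finite) \<le> 1"
  unfolding prob_reach_def by (rule cSUP_least) (auto simp: R_bounds)

lemma bdd_R: "bdd_above (range (\<lambda>n. reach_within delta pi1 pi2 X n [s::'s::finite]))"
  by (rule bdd_aboveI[of _ 1]) (auto simp: R_bounds)

theorem lemma1:
  fixes G1 G2 :: "'s::finite \<Rightarrow> 'm::finite set"
    and delta :: "'s \<Rightarrow> 'm \<Rightarrow> 'm \<Rightarrow> 's pmf"
    and T :: "'s set"
    and xi1 :: "'s \<Rightarrow> 'm pmf"
  assumes "game G1 G2 delta"
    and "\<forall>s \<in> T \<union> W2 G1 G2 delta T. absorbing G1 G2 delta s"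
    and "selector G1 xi1"
  shows "proper G1 G2 delta T (memoryless xi1) \<longleftrightarrow>
         (\<forall>xi2. pure_selector G2 xi2 \<longrightarrow>
            (\<forall>s. prob_reach delta (memoryless xi1) (memoryless xi2) (T \<union> W2 G1 G2 delta T) s = 1))"
proof -
  define X where "X = T \<union> W2 G1 G2 delta T"
  have inX: "prob_reach delta pi1 pi2 X s = 1" if "s \<in> X" for pi1 pi2 s
    using that unfolding prob_reach_def by (simp add: R_X)
  show ?thesis unfolding X_def[symmetric]
  proof
    assume pr: "proper G1 G2 delta T (memoryless xi1)"
    show "\<forall>xi2. pure_selector G2 xi2 \<longrightarrow> (\<forall>s. prob_reach delta (memoryless xi1) (memoryless xi2) X s = 1)"
    proof (intro allI impI)
      fix xi2 s assume ps: "pure_selector G2 xi2"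
      have "strategy G2 (memoryless xi2)" using ps
        unfolding strategy_def memoryless_def pure_selector_def selector_def by auto
      then show "prob_reach delta (memoryless xi1) (memoryless xi2) X s = 1"
        using pr inX unfolding proper_def X_def by blast
    qed
  next
    assume H: "\<forall>xi2. pure_selector G2 xi2 \<longrightarrow> (\<forall>s. prob_reach delta (memoryless xi1) (memoryless xi2) X s = 1)"
    define P where "P = (\<lambda>s a. bind_pmf (xi1 s) (\<lambda>a1. delta s a1 a))"
    define L where "L = lev G2 P X"
    have Lmono: "L k \<subseteq> L (Suc k)" for k unfolding L_def by (rule lev_mono)
    have "\<exists>K. L (Suc K) \<subseteq> L K"
    proof (rule ccontr)
      assume "\<not> ?thesis"
      then have ps: "L K \<subset> L (Suc K)" for K using Lmono by blast
      have c: "K \<le> card (L K)" for K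
      proof (induction K)
        case (Suc K)
        have "card (L K) < card (L (Suc K))" by (rule psubset_card_mono) (auto simp: ps)
        then show ?case using Suc by simp
      qed simp
      have "card (L (Suc CARD('s))) \<le> CARD('s)" by (rule card_mono) auto
      then show False using c[of "Suc CARD('s)"] by simp
    qed
    then obtain K where K: "L (Suc K) \<subseteq> L K" by blast
    have LU: "L K = UNIV"
    proof (rule ccontr)
      assume "L K \<noteq> UNIV"
      then obtain s0 where s0: "s0 \<notin> L K" by blast
      define Z where "Z = - L K"
      have trap: "s \<notin> X \<and> (\<exists>a\<in>G2 s. set_pmf (P s a) \<subseteq> Z)" if "s \<in> Z" for s
      proof -
        have "s \<notin> L (Suc K)" using that K unfolding Z_def by blast
        then show ?thesis unfolding L_def Z_def by auto
      qed
      have ne: "\<exists>a. a \<in> G2 s" for s using assms(1) unfolding game_def by blast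
      define ch where "ch = (\<lambda>s. if s \<in> Z then (SOME a. a\<in>G2 s \<and> set_pmf (P s a) \<subseteq> Z) else (SOME a. a \<in> G2 s))"
      have chZ: "ch s \<in> G2 s \<and> set_pmf (P s (ch s)) \<subseteq> Z" if "s \<in> Z" for s
      proof -
        have "\<exists>a. a\<in>G2 s \<and> set_pmf (P s a) \<subseteq> Z" using trap[OF that] by blast
        then have "(SOME a. a\<in>G2 s \<and> set_pmf (P s a) \<subseteq> Z) \<in> G2 s \<and> set_pmf (P s (SOME a. a\<in>G2 s \<and> set_pmf (P s a) \<subseteq> Z)) \<subseteq> Z"
          by (rule someI_ex)
        then show ?thesis unfolding ch_def using that by simp
      qed
      have chG: "ch s \<in> G2 s" for s
      proof (cases "s \<in> Z")
        case True then show ?thesis using chZ by blast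
      next
        case False
        have "(SOME a. a \<in> G2 s) \<in> G2 s" using ne[of s] by (rule someI_ex)
        then show ?thesis unfolding ch_def using False by simp
      qed
      define xi2 where "xi2 = (\<lambda>s. return_pmf (ch s))"
      have psel: "pure_selector G2 xi2"
        unfolding pure_selector_def selector_def xi2_def using chG by auto
      have zero: "last h \<in> Z \<Longrightarrow> reach_within delta (memoryless xi1) (memoryless xi2) X n h = 0" for n h
      proof (induction n arbitrary: h)
        case 0 then show ?case using trap by auto
      next
        case (Suc n)
        have st: "step delta (memoryless xi1) (memoryless xi2) h = P (last h) (ch (last h))"
          unfolding step_memo P_def by (simp add: memoryless_def xi2_def bind_return_pmf)
        have "(\<Sum>t\<in>UNIV. reach_within delta (memoryless xi1) (memoryless xi2) X n (h @ [t]) * pmf (P (last h) (ch (last h))) t) = 0"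
        proof (intro sum.neutral ballI)
          fix t
          show "reach_within delta (memoryless xi1) (memoryless xi2) X n (h @ [t]) * pmf (P (last h) (ch (last h))) t = 0"
          proof (cases "t \<in> set_pmf (P (last h) (ch (last h)))")
            case True
            then have "t \<in> Z" using chZ[OF Suc.prems] by blast
            then show ?thesis using Suc.IH[of "h @ [t]"] by simp
          qed (simp add: set_pmf_eq)
        qed
        then show ?case using trap[OF Suc.prems] by (simp add: st exp_fin)
      qed
      have "prob_reach delta (memoryless xi1) (memoryless xi2) X s0 = 0"
        unfolding prob_reach_def using zero[of "[s0]"] s0 by (simp add: Z_def)
      then show False using H psel by fastforce
    qed
    define Q where "Q = (\<lambda>(s,a,t). pmf (P s a) t) ` {(s,a,t). t \<in> set_pmf (P s a)}"
    define q where "q = Min Q"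
    have finQ: "finite Q" unfolding Q_def by simp
    obtain s1 :: 's and a1 :: 'm where True by blast
    obtain t1 where "t1 \<in> set_pmf (P s1 a1)" using set_pmf_not_empty by fast
    then have neQ: "Q \<noteq> {}" unfolding Q_def by blast
    have q_pos: "0 < q" unfolding q_def using finQ neQ
      by (subst Min_gr_iff) (auto simp: Q_def set_pmf_iff)
    have q_le: "q \<le> pmf (P s a) t" if "t \<in> set_pmf (P s a)" for s a t
    proof -
      have "pmf (P s a) t \<in> Q" unfolding Q_def using that
        by (intro image_eqI[where x="(s,a,t)"]) auto
      then show ?thesis unfolding q_def using finQ by (intro Min_le)
    qed
    have q1: "q \<le> 1" using q_le[of t1 s1 a1] \<open>t1 \<in> _\<close> pmf_le_1[of "P s1 a1" t1] by linarith
    show "proper G1 G2 delta T (memoryless xi1)"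
      unfolding proper_def X_def[symmetric]
    proof (intro allI impI)
      fix pi2 s assume st: "strategy G2 pi2" and sX: "s \<notin> X"
      let ?R = "\<lambda>n h. reach_within delta (memoryless xi1) pi2 X n h"
      define c where "c = q ^ K"
      have c0: "0 < c" "c \<le> 1" unfolding c_def using q_pos q1 by (auto simp: power_le_one)
      have Rc: "c \<le> ?R K h" if "h \<noteq> []" for h
        unfolding c_def
        by (rule level_bound[OF st less_imp_le[OF q_pos] q1, of xi1 delta h X K])
           (use q_le that LU in \<open>auto simp: P_def L_def\<close>)
      have fail: "1 - ?R (m * K) h \<le> (1 - c) ^ m" if "h \<noteq> []" for m h
        using that
      proof (induction m arbitrary: h)
        case 0 then show ?case using R_bounds[of delta "memoryless xi1" pi2 X 0 h] by simp
      next
        case (Suc m)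
        have "1 - ?R (K + m * K) h \<le> (1 - c) ^ m * (1 - ?R K h)"
          by (rule R_comp) (use Suc c0 in auto)
        also have "\<dots> \<le> (1 - c) ^ m * (1 - c)"
          using Rc[OF Suc.prems] c0 by (intro mult_left_mono) auto
        finally have "1 - ?R (K + m * K) h \<le> (1 - c) ^ Suc m" by (simp add: mult.commute)
        moreover have "Suc m * K = K + m * K" by simp
        ultimately show ?case by simp
      qed
      show "prob_reach delta (memoryless xi1) pi2 X s = 1"
      proof (rule antisym[OF prob_reach_le1], rule ccontr)
        assume "\<not> 1 \<le> prob_reach delta (memoryless xi1) pi2 X s"
        then have e: "0 < 1 - prob_reach delta (memoryless xi1) pi2 X s" by simp
        have "1 - c < 1" using c0 by simp
        then obtain m where m: "(1 - c) ^ m < 1 - prob_reach delta (memoryless xi1) pi2 X s"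
          using real_arch_pow_inv[OF e] by blast
        have "?R (m * K) [s] \<le> prob_reach delta (memoryless xi1) pi2 X s"
          unfolding prob_reach_def by (rule cSUP_upper[OF _ bdd_R]) simp
        then show False using fail[of "[s]" m] m by simp
      qed
    qed
  qed
qed

end
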